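(* Let $A,B\in L(\mathbb{R}^n,\mathbb{R}^n)$ be symmetric, let $I\subset\mathbb{R}$ be a non-empty open interval, and let $E:I\to L(\mathbb{R}^{n-m},\mathbb{R}^n)$ be differentiable with $E(t)$ injective for every $t\in I$. Suppose there is a differentiable $\mu:I\to\mathbb{R}$ with ${}^tE(t)BE(t)=\mu(t)\,{}^tE(t)AE(t)$ for every $t\in I$. If $\operatorname{rank}A>4m$, then $\mu$ is constant. *)

theory Defs
  imports "HOL-Analysis.Analysis"
begin

end

theory Submission
  imports Defs "HOL-Analysis.Analysis"
begin

lemma rank_nullity_sub:
  fixes f :: "'a::euclidean_space \<Rightarrow> 'b::euclidean_space"
  assumes lf: "linear f" and S: "subspace S"
  shows "dim (S \<inter> {x. f x = 0}) + dim (f ` S) = dim S"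
proof -
  define K where "K = S \<inter> {x. f x = 0}"
  have sK: "subspace K" unfolding K_def
    using S lf by (auto simp: subspace_def linear_add linear_0 linear_scale)
  define T where "T = {y \<in> S. \<forall>x \<in> K. orthogonal x y}"
  have KS: "K \<subseteq> S" by (auto simp: K_def)
  have d1: "dim T + dim K = dim S" unfolding T_def
    by (rule dim_subspace_orthogonal_to_vectors[OF sK S KS])
  have sT: "subspace T" unfolding T_def
    using S by (auto simp: subspace_def orthogonal_def inner_add_right)
  have injT: "inj_on f (span T)"
  proof -
    have "inj_on f T"
    proof (rule inj_onI)
      fix x y assume xy: "x \<in> T" "y \<in> T" "f x = f y"
      then have "x - y \<in> T" using sT by (simp add: subspace_diff)
      moreover have "f (x - y) = 0" using xy lf by (simp add: linear_diff)
      ultimately have "x - y \<in> K" by (auto simp: K_def T_def)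
      with \<open>x - y \<in> T\<close> have "orthogonal (x - y) (x - y)" by (auto simp: T_def)
      then have "x - y = 0" by (rule orthogonal_self[THEN iffD1])
      then show "x = y" by simp
    qed
    moreover have "span T = T" using sT by (rule span_eq_iff[THEN iffD2])
    ultimately show ?thesis by metis
  qed
  have "dim (f ` T) = dim T" by (rule dim_image_eq[OF lf injT])
  moreover have "f ` S = f ` T"
  proof
    show "f ` T \<subseteq> f ` S" by (auto simp: T_def)
    show "f ` S \<subseteq> f ` T"
    proof
      fix z assume "z \<in> f ` S"
      then obtain s where s: "s \<in> S" "z = f s" by auto
      obtain y w where y: "y \<in> span K" and w: "\<And>u. u \<in> span K \<Longrightarrow> orthogonal w u" and sy: "s = y + w"
        using orthogonal_subspace_decomp_exists[of K s] by metis
      have yK: "y \<in> K" using y span_eq_iff[THEN iffD2, OF sK] by simp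
      have "w = s - y" using sy by simp
      then have "w \<in> S" using s yK KS S by (auto intro: subspace_diff)
      moreover have "\<forall>x\<in>K. orthogonal x w" using w by (simp add: orthogonal_commute span_base)
      ultimately have "w \<in> T" by (simp add: T_def)
      moreover have "f s = f w" using sy yK lf by (simp add: linear_add K_def)
      ultimately show "z \<in> f ` T" using s by auto
    qed
  qed
  ultimately show ?thesis using d1 by (simp add: K_def)
qed

lemma dim_ker_rank:
  fixes X :: "real^'n^'m"
  shows "dim {x. X *v x = 0} + rank X = CARD('n)"
  using rank_nullity_sub[of "(*v) X" UNIV]
  by (simp add: rank_dim_range matrix_vector_mul_linear)

lemma sylvester:
  fixes X :: "real^'n^'m" and Y :: "real^'p^'n"
  shows "rank X + rank Y \<le> rank (X ** Y) + CARD('n)"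
proof -
  have "subspace (range ((*v) Y))"
    by (simp add: matrix_vector_mul_linear subspace_UNIV linear_subspace_image)
  from rank_nullity_sub[OF matrix_vector_mul_linear[of X] this]
  have "dim (range ((*v) Y) \<inter> {x. X *v x = 0}) + dim ((*v) X ` range ((*v) Y)) = rank Y"
    by (simp add: rank_dim_range)
  moreover have "(*v) X ` range ((*v) Y) = range ((*v) (X ** Y))"
    by (auto simp: image_comp o_def matrix_vector_mul_assoc)
  moreover have "dim (range ((*v) Y) \<inter> {x. X *v x = 0}) \<le> dim {x. X *v x = 0}"
    by (rule dim_subset) auto
  ultimately show ?thesis using dim_ker_rank[of X] by (simp add: rank_dim_range)
qed

lemma rank_add_le:
  fixes X Y :: "real^'n^'m"
  shows "rank (X + Y) \<le> rank X + rank Y"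
proof -
  have s1: "subspace (range ((*v) X))" "subspace (range ((*v) Y))"
    by (simp_all add: matrix_vector_mul_linear subspace_UNIV linear_subspace_image)
  have "range ((*v) (X + Y)) \<subseteq> {x + y |x y. x \<in> range ((*v) X) \<and> y \<in> range ((*v) Y)}"
    by (auto simp: matrix_vector_mult_add_rdistrib)
  then have "rank (X + Y) \<le> dim {x + y |x y. x \<in> range ((*v) X) \<and> y \<in> range ((*v) Y)}"
    by (simp add: rank_dim_range dim_subset)
  then show ?thesis using dim_sums_Int[OF s1] by (simp add: rank_dim_range)
qed

lemma rank_scaleR_le:
  fixes X :: "real^'n^'m"
  shows "rank (c *\<^sub>R X) \<le> rank X"
proof -
  have "range ((*v) (c *\<^sub>R X)) \<subseteq> range ((*v) X)"
  proof
    fix z assume "z \<in> range ((*v) (c *\<^sub>R X))"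
    then obtain x where "z = (c *\<^sub>R X) *v x" by auto
    then have "z = X *v (c *\<^sub>R x)"
      by (simp add: vec_eq_iff matrix_vector_mult_def sum_distrib_left algebra_simps)
    then show "z \<in> range ((*v) X)" by auto
  qed
  then show ?thesis by (simp add: rank_dim_range dim_subset)
qed

lemma transpose_diff_scale:
  fixes B A :: "real^'n^'n"
  shows "transpose (B - c *\<^sub>R A) = transpose B - c *\<^sub>R transpose A"
  by (simp add: transpose_def vec_eq_iff)

lemma key_rank:
  fixes A C :: "real^'n^'n" and E D :: "real^'k^'n"
  assumes dims: "CARD('k) + m = CARD('n)"
    and inj: "inj ((*v) E)"
    and symC: "transpose C = C"
    and z: "transpose E ** C ** E = 0"
    and deq: "transpose D ** C ** E + transpose E ** C ** D = d *\<^sub>R (transpose E ** A ** E)"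
    and d: "d \<noteq> 0"
  shows "rank A \<le> 4 * m"
proof -
  have rE: "rank E = CARD('k)" using inj full_rank_injective by blast
  have rEt: "rank (transpose E) = CARD('k)" using rE rank_transpose by metis
  have "rank (transpose E) + rank (C ** E) \<le> rank (transpose E ** (C ** E)) + CARD('n)"
    by (rule sylvester)
  moreover have "transpose E ** (C ** E) = 0" using z by (simp add: matrix_mul_assoc)
  ultimately have rCE: "rank (C ** E) \<le> m" using rEt dims by simp
  define N1 where "N1 = transpose D ** (C ** E)"
  have r1: "rank N1 \<le> m" unfolding N1_def using rank_mul_le_right[of "transpose D" "C ** E"] rCE by simp
  have N2: "transpose N1 = transpose E ** C ** D"
    unfolding N1_def by (simp add: matrix_transpose_mul symC matrix_mul_assoc)
  have r2: "rank (transpose E ** C ** D) \<le> m" using r1 N2 rank_transpose by metis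
  have eq2: "transpose E ** A ** E = (1/d) *\<^sub>R (N1 + transpose E ** C ** D)"
    using deq d unfolding N1_def by (simp add: matrix_mul_assoc)
  have "rank (transpose E ** A ** E) \<le> rank (N1 + transpose E ** C ** D)"
    unfolding eq2 by (rule rank_scaleR_le)
  also have "\<dots> \<le> 2 * m" using rank_add_le[of N1 "transpose E ** C ** D"] r1 r2 by simp
  finally have up: "rank (transpose E ** A ** E) \<le> 2 * m" .
  have s1: "rank A + rank E \<le> rank (A ** E) + CARD('n)" by (rule sylvester)
  have s2: "rank (transpose E) + rank (A ** E) \<le> rank (transpose E ** (A ** E)) + CARD('n)" by (rule sylvester)
  have "transpose E ** (A ** E) = transpose E ** A ** E" by (simp add: matrix_mul_assoc)
  with s1 s2 up rE rEt dims show ?thesis by simp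
qed


lemma matrix_add_rdistrib': "((A + B) ** C) = (A ** C) + (B ** C)"
  by (vector matrix_matrix_mult_def sum.distrib[symmetric] field_simps)

lemma bb_mm: "bounded_bilinear ((**) :: real^'n^'m \<Rightarrow> real^'p^'n \<Rightarrow> real^'p^'m)"
proof -
  have "bilinear ((**) :: real^'n^'m \<Rightarrow> real^'p^'n \<Rightarrow> real^'p^'m)"
    unfolding bilinear_def
    by (auto intro!: linearI simp: matrix_add_ldistrib matrix_add_rdistrib' matrix_scalar_ac scalar_matrix_assoc)
  then show ?thesis by (simp add: bilinear_conv_bounded_bilinear)
qed

lemma bl_transpose: "bounded_linear (transpose :: real^'n^'m \<Rightarrow> real^'m^'n)"
proof -
  have "linear (transpose :: real^'n^'m \<Rightarrow> real^'m^'n)"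
    by (auto intro!: linearI simp: transpose_def vec_eq_iff)
  then show ?thesis by (simp add: linear_conv_bounded_linear)
qed

lemma deriv_zero_at:
  fixes A B :: "real^'n^'n"
    and E :: "real \<Rightarrow> real^'k^'n"
    and \<mu> :: "real \<Rightarrow> real"
  assumes I_open: "open I" and t: "t \<in> I"
    and hE: "(E has_vector_derivative D) (at t)"
    and hmu: "(\<mu> has_real_derivative d) (at t)"
    and eq: "\<forall>t\<in>I. transpose (E t) ** B ** E t = \<mu> t *\<^sub>R (transpose (E t) ** A ** E t)"
  shows "transpose D ** (B - \<mu> t *\<^sub>R A) ** E t + transpose (E t) ** (B - \<mu> t *\<^sub>R A) ** D
     = d *\<^sub>R (transpose (E t) ** A ** E t)"
proof -
  note mm = bb_mm
  have hE': "(E has_derivative (\<lambda>h. h *\<^sub>R D)) (at t)" using hE by (simp add: has_vector_derivative_def)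
  have hm': "(\<mu> has_derivative (\<lambda>h. h * d)) (at t)" 
  proof -
    have "(\<lambda>h. h * d) = (*) d" by (auto simp: fun_eq_iff)
    then show ?thesis using hmu by (simp add: has_field_derivative_def)
  qed
  have hT: "((\<lambda>s. transpose (E s)) has_derivative (\<lambda>h. transpose (h *\<^sub>R D))) (at t)"
    by (rule bounded_linear.has_derivative[OF bl_transpose hE'])
  have h1: "((\<lambda>s. transpose (E s) ** B) has_derivative (\<lambda>h. transpose (E t) ** 0 + transpose (h *\<^sub>R D) ** B)) (at t)"
    by (rule bounded_bilinear.FDERIV[OF mm hT has_derivative_const])
  have h2: "((\<lambda>s. transpose (E s) ** B ** E s) has_derivative
     (\<lambda>h. transpose (E t) ** B ** (h *\<^sub>R D) + (transpose (E t) ** 0 + transpose (h *\<^sub>R D) ** B) ** E t)) (at t)"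
    by (rule bounded_bilinear.FDERIV[OF mm h1 hE'])
  have h3: "((\<lambda>s. transpose (E s) ** A) has_derivative (\<lambda>h. transpose (E t) ** 0 + transpose (h *\<^sub>R D) ** A)) (at t)"
    by (rule bounded_bilinear.FDERIV[OF mm hT has_derivative_const])
  have h4: "((\<lambda>s. transpose (E s) ** A ** E s) has_derivative
     (\<lambda>h. transpose (E t) ** A ** (h *\<^sub>R D) + (transpose (E t) ** 0 + transpose (h *\<^sub>R D) ** A) ** E t)) (at t)"
    by (rule bounded_bilinear.FDERIV[OF mm h3 hE'])
  have h5: "((\<lambda>s. \<mu> s *\<^sub>R (transpose (E s) ** A ** E s)) has_derivative
     (\<lambda>h. \<mu> t *\<^sub>R (transpose (E t) ** A ** (h *\<^sub>R D) + (transpose (E t) ** 0 + transpose (h *\<^sub>R D) ** A) ** E t)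
        + (h * d) *\<^sub>R (transpose (E t) ** A ** E t))) (at t)"
    by (rule bounded_bilinear.FDERIV[OF bounded_bilinear_scaleR hm' h4])
  define F' where "F' = (\<lambda>h. (transpose (E t) ** B ** (h *\<^sub>R D) + (transpose (E t) ** 0 + transpose (h *\<^sub>R D) ** B) ** E t)
     - (\<mu> t *\<^sub>R (transpose (E t) ** A ** (h *\<^sub>R D) + (transpose (E t) ** 0 + transpose (h *\<^sub>R D) ** A) ** E t)
        + (h * d) *\<^sub>R (transpose (E t) ** A ** E t)))"
  have h6: "((\<lambda>s. transpose (E s) ** B ** E s - \<mu> s *\<^sub>R (transpose (E s) ** A ** E s)) has_derivative F') (at t)"
    unfolding F'_def by (rule has_derivative_diff[OF h2 h5])
  have h7: "((\<lambda>s. transpose (E s) ** B ** E s - \<mu> s *\<^sub>R (transpose (E s) ** A ** E s)) has_derivative (\<lambda>h. 0)) (at t)"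
    by (rule has_derivative_transform_within_open[OF has_derivative_const I_open t]) (use eq in simp)
  have "F' = (\<lambda>h. 0)" by (rule has_derivative_unique[OF h6 h7])
  then have "F' 1 = 0" by simp
  then show ?thesis
    unfolding F'_def
    by (simp add: bounded_bilinear.diff_left[OF mm] bounded_bilinear.diff_right[OF mm]
        bounded_bilinear.scaleR_left[OF mm] bounded_bilinear.scaleR_right[OF mm]
        bounded_bilinear.zero_right[OF mm] matrix_mul_assoc algebra_simps)
qed


theorem lemma3p3:
  fixes A B :: "real^'n^'n"
    and E :: "real \<Rightarrow> real^'k^'n"
    and \<mu> :: "real \<Rightarrow> real"
    and I :: "real set"
    and m :: nat
  assumes dims: "CARD('k) + m = CARD('n)"
    and symA: "transpose A = A"
    and symB: "transpose B = B"
    and I_open: "open I" and I_interval: "is_interval I" and I_ne: "I \<noteq> {}"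
    and E_diff: "\<forall>t\<in>I. E differentiable (at t)"
    and E_inj: "\<forall>t\<in>I. inj ((*v) (E t))"
    and mu_diff: "\<forall>t\<in>I. \<mu> differentiable (at t)"
    and eq: "\<forall>t\<in>I. transpose (E t) ** B ** E t = \<mu> t *\<^sub>R (transpose (E t) ** A ** E t)"
    and rk: "rank A > 4 * m"
  shows "\<exists>c. \<forall>t\<in>I. \<mu> t = c"
proof (rule has_field_derivative_zero_constant)
  show "convex I" using I_interval by (rule is_interval_convex)
  fix t assume t: "t \<in> I"
  define D where "D = vector_derivative E (at t)"
  have hE: "(E has_vector_derivative D) (at t)"
    unfolding D_def using E_diff t vector_derivative_works by blast
  define d where "d = vector_derivative \<mu> (at t)"
  have hmv: "(\<mu> has_vector_derivative d) (at t)"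
    unfolding d_def using mu_diff t vector_derivative_works by blast
  then have hmu: "(\<mu> has_real_derivative d) (at t)"
    by (simp add: has_real_derivative_iff_has_vector_derivative)
  have de: "transpose D ** (B - \<mu> t *\<^sub>R A) ** E t + transpose (E t) ** (B - \<mu> t *\<^sub>R A) ** D
     = d *\<^sub>R (transpose (E t) ** A ** E t)"
    by (rule deriv_zero_at[OF I_open t hE hmu eq])
  have d0: "d = 0"
  proof (rule ccontr)
    assume "d \<noteq> 0"
    have symC: "transpose (B - \<mu> t *\<^sub>R A) = B - \<mu> t *\<^sub>R A"
      by (simp add: transpose_diff_scale symA symB)
    have z: "transpose (E t) ** (B - \<mu> t *\<^sub>R A) ** E t = 0"
      using eq t bb_mm
      by (simp add: bounded_bilinear.diff_left[OF bb_mm] bounded_bilinear.diff_right[OF bb_mm]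
        bounded_bilinear.scaleR_left[OF bb_mm] bounded_bilinear.scaleR_right[OF bb_mm])
    have "rank A \<le> 4 * m"
      by (rule key_rank[OF dims _ symC z de \<open>d \<noteq> 0\<close>]) (use E_inj t in blast)
    with rk show False by simp
  qed
  show "(\<mu> has_real_derivative 0) (at t within I)"
    using hmu d0 by (simp add: has_field_derivative_at_within)
qed

end
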